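(* Suppose $J^d_\mu$ takes the same value for all $d\in\mathcal D$. Then the policy $d$ returned by Algorithm 1 (from any initial policy) is globally optimal: $J^d_{\mu,\sigma}=\max_{d'\in\mathcal D}J^{d'}_{\mu,\sigma}$.
   Context: Let $\mathcal S=\{1,\dots,S\}$ be a finite state space and $\mathcal A$ a finite action set, with transition probabilities $p^a(i,j)\ge0$ ($\sum_j p^a(i,j)=1$) and rewards $r(i,a)\in\mathbb R$. A deterministic stationary policy is a map $d:\mathcal S\to\mathcal A$; $\mathcal D$ is the set of these; $\mathbf P^d$ has entries $p^{d(i)}(i,j)$, $\mathbf r^d$ has entries $r(i,d(i))$. Standing assumption: every $\mathbf P^d$ is irreducible, with unique stationary distribution $\boldsymbol\pi^d$ (positive entries). Define $J^d_\mu=\boldsymbol\pi^d\mathbf r^d$, and for fixed $\beta>0$, $J^d_{\mu,\sigma}=\boldsymbol\pi^d\mathbf f^d$ with $f^d(i)=r(i,d(i))-\beta(r(i,d(i))-J^d_\mu)^2$; $\mathbf g^d$ is any solution of $\mathbf g^d=\mathbf f^d-J^d_{\mu,\sigma}\mathbf 1+\mathbf P^d\mathbf g^d$. Algorithm 1: choose any $d^{(0)}\in\mathcal D$, $l=0$; repeat: compute $J_\mu=J^{d^{(l)}}_\mu$ and $\mathbf g=\mathbf g^{d^{(l)}}$; define $d^{(l+1)}(i)\in\arg\max_{a\in\mathcal A}\{r(i,a)-\beta[r(i,a)-J_\mu]^2+\sum_j p^a(i,j)g(j)\}$ for all $i$, choosing $d^{(l+1)}(i)=d^{(l)}(i)$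 whenever $d^{(l)}(i)$ attains the maximum; set $l:=l+1$; until $d^{(l)}=d^{(l-1)}$; return $d^{(l)}$ (this terminates after finitely many iterations). *)

theory Defs
  imports Complex_Main
begin

text \<open>States: a finite type 's; actions: a finite type 'a.
  p a i j = transition probability from i to j under action a; r i a = reward.\<close>

definition Pmat :: "('a \<Rightarrow> 's \<Rightarrow> 's \<Rightarrow> real) \<Rightarrow> ('s \<Rightarrow> 'a) \<Rightarrow> 's \<Rightarrow> 's \<Rightarrow> real" where
  "Pmat p d i j = p (d i) i j"

fun mpow :: "('s::finite \<Rightarrow> 's \<Rightarrow> real) \<Rightarrow> nat \<Rightarrow> 's \<Rightarrow> 's \<Rightarrow> real" where
  "mpow P 0 i j = (if i = j then 1 else 0)"
| "mpow P (Suc n) i j = (\<Sum>k\<in>UNIV. mpow P n i k * P k j)"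

definition irreducible_mat :: "('s::finite \<Rightarrow> 's \<Rightarrow> real) \<Rightarrow> bool" where
  "irreducible_mat P \<longleftrightarrow> (\<forall>i j. \<exists>n. mpow P n i j > 0)"

definition is_stationary :: "('s::finite \<Rightarrow> 's \<Rightarrow> real) \<Rightarrow> ('s \<Rightarrow> real) \<Rightarrow> bool" where
  "is_stationary P \<pi> \<longleftrightarrow> (\<forall>i. \<pi> i \<ge> 0) \<and> (\<Sum>i\<in>UNIV. \<pi> i) = 1 \<and>
     (\<forall>j. (\<Sum>i\<in>UNIV. \<pi> i * P i j) = \<pi> j)"

definition stat_dist :: "('a \<Rightarrow> 's::finite \<Rightarrow> 's \<Rightarrow> real) \<Rightarrow> ('s \<Rightarrow> 'a) \<Rightarrow> 's \<Rightarrow> real" where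
  "stat_dist p d = (THE \<pi>. is_stationary (Pmat p d) \<pi>)"

definition J_mu :: "('a \<Rightarrow> 's::finite \<Rightarrow> 's \<Rightarrow> real) \<Rightarrow> ('s \<Rightarrow> 'a \<Rightarrow> real) \<Rightarrow> ('s \<Rightarrow> 'a) \<Rightarrow> real" where
  "J_mu p r d = (\<Sum>i\<in>UNIV. stat_dist p d i * r i (d i))"

definition f_ms :: "('a \<Rightarrow> 's::finite \<Rightarrow> 's \<Rightarrow> real) \<Rightarrow> ('s \<Rightarrow> 'a \<Rightarrow> real) \<Rightarrow> real \<Rightarrow> ('s \<Rightarrow> 'a) \<Rightarrow> 's \<Rightarrow> real" where
  "f_ms p r \<beta> d i = r i (d i) - \<beta> * (r i (d i) - J_mu p r d)\<^sup>2"

definition J_ms :: "('a \<Rightarrow> 's::finite \<Rightarrow> 's \<Rightarrow> real) \<Rightarrow> ('s \<Rightarrow> 'a \<Rightarrow> real) \<Rightarrow> real \<Rightarrow> ('s \<Rightarrow> 'a) \<Rightarrow> real" where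
  "J_ms p r \<beta> d = (\<Sum>i\<in>UNIV. stat_dist p d i * f_ms p r \<beta> d i)"

definition poisson_sol :: "('a \<Rightarrow> 's::finite \<Rightarrow> 's \<Rightarrow> real) \<Rightarrow> ('s \<Rightarrow> 'a \<Rightarrow> real) \<Rightarrow> real \<Rightarrow> ('s \<Rightarrow> 'a) \<Rightarrow> ('s \<Rightarrow> real) \<Rightarrow> bool" where
  "poisson_sol p r \<beta> d g \<longleftrightarrow>
     (\<forall>i. g i = f_ms p r \<beta> d i - J_ms p r \<beta> d + (\<Sum>j\<in>UNIV. Pmat p d i j * g j))"

definition Qval :: "('a \<Rightarrow> 's::finite \<Rightarrow> 's \<Rightarrow> real) \<Rightarrow> ('s \<Rightarrow> 'a \<Rightarrow> real) \<Rightarrow> real \<Rightarrow> real \<Rightarrow> ('s \<Rightarrow> real) \<Rightarrow> 's \<Rightarrow> 'a \<Rightarrow> real" where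
  "Qval p r \<beta> J g i a = r i a - \<beta> * (r i a - J)\<^sup>2 + (\<Sum>j\<in>UNIV. p a i j * g j)"

text \<open>A terminated run of Algorithm 1: policies ds 0, ..., ds L (L \<ge> 1), bias vectors gs l
  (any Poisson solutions), improvement steps with the tie-breaking rule, stopping at the
  first L with ds L = ds (L-1). The returned policy is ds L.\<close>
definition alg1_run :: "('a \<Rightarrow> 's::finite \<Rightarrow> 's \<Rightarrow> real) \<Rightarrow> ('s \<Rightarrow> 'a \<Rightarrow> real) \<Rightarrow> real \<Rightarrow>
    (nat \<Rightarrow> 's \<Rightarrow> 'a) \<Rightarrow> (nat \<Rightarrow> 's \<Rightarrow> real) \<Rightarrow> nat \<Rightarrow> bool" where
  "alg1_run p r \<beta> ds gs L \<longleftrightarrow>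
     L \<ge> 1 \<and>
     (\<forall>l<L. poisson_sol p r \<beta> (ds l) (gs l)) \<and>
     (\<forall>l<L. \<forall>i.
        (\<forall>a. Qval p r \<beta> (J_mu p r (ds l)) (gs l) i a
              \<le> Qval p r \<beta> (J_mu p r (ds l)) (gs l) i (ds (Suc l) i)) \<and>
        ((\<forall>a. Qval p r \<beta> (J_mu p r (ds l)) (gs l) i a
              \<le> Qval p r \<beta> (J_mu p r (ds l)) (gs l) i (ds l i)) \<longrightarrow> ds (Suc l) i = ds l i)) \<and>
     (\<forall>l. l + 1 < L \<longrightarrow> ds (Suc l) \<noteq> ds l) \<and>
     ds L = ds (L - 1)"

end

theory Submission
  imports Defs
begin

theorem mainTheorem10:
  fixes p :: "'a::finite \<Rightarrow> 's::finite \<Rightarrow> 's \<Rightarrow> real"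
    and r :: "'s \<Rightarrow> 'a \<Rightarrow> real"
    and \<beta> :: real
    and ds :: "nat \<Rightarrow> 's \<Rightarrow> 'a" and gs :: "nat \<Rightarrow> 's \<Rightarrow> real" and L :: nat
  assumes p_nonneg: "\<And>a i j. p a i j \<ge> 0"
    and p_row: "\<And>a i. (\<Sum>j\<in>UNIV. p a i j) = 1"
    and irred: "\<And>d. irreducible_mat (Pmat p d)"
    and uniq_stat: "\<And>d. \<exists>!\<pi>. is_stationary (Pmat p d) \<pi>"
    and beta_pos: "\<beta> > 0"
    and Jmu_const: "\<And>d d'. J_mu p r d = J_mu p r d'"
    and run: "alg1_run p r \<beta> ds gs L"
  shows "J_ms p r \<beta> (ds L) = Max (range (J_ms p r \<beta>))"
proof -
  define l0 where "l0 = L - 1"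
  define d where "d = ds L"
  define g where "g = gs l0"
  have L1: "L \<ge> 1" and l0L: "l0 < L" using run unfolding alg1_run_def l0_def by auto
  have SucL: "Suc l0 = L" using L1 unfolding l0_def by simp
  have dl0: "ds l0 = d" using run unfolding alg1_run_def d_def l0_def by auto
  have pois: "poisson_sol p r \<beta> d g" using run l0L dl0 unfolding alg1_run_def g_def by auto
  have Qall: "\<forall>l<L. \<forall>i. \<forall>a. Qval p r \<beta> (J_mu p r (ds l)) (gs l) i a
              \<le> Qval p r \<beta> (J_mu p r (ds l)) (gs l) i (ds (Suc l) i)"
    using run unfolding alg1_run_def by blast
  have Qle: "\<And>i a. Qval p r \<beta> (J_mu p r d) g i a \<le> Qval p r \<beta> (J_mu p r d) g i (d i)"
  proof -
    fix i a
    have "Qval p r \<beta> (J_mu p r (ds l0)) (gs l0) i a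
              \<le> Qval p r \<beta> (J_mu p r (ds l0)) (gs l0) i (ds (Suc l0) i)"
      using Qall l0L by blast
    then show "Qval p r \<beta> (J_mu p r d) g i a \<le> Qval p r \<beta> (J_mu p r d) g i (d i)"
      unfolding dl0 SucL g_def d_def .
  qed
  have Qd: "Qval p r \<beta> (J_mu p r d) g i (d i) = g i + J_ms p r \<beta> d" for i
  proof -
    have "g i = f_ms p r \<beta> d i - J_ms p r \<beta> d + (\<Sum>j\<in>UNIV. Pmat p d i j * g j)"
      using pois unfolding poisson_sol_def by blast
    then show ?thesis unfolding Qval_def f_ms_def Pmat_def by simp
  qed
  have bound: "J_ms p r \<beta> d' \<le> J_ms p r \<beta> d" for d'
  proof -
    define \<pi> where "\<pi> = stat_dist p d'"
    have st: "is_stationary (Pmat p d') \<pi>"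
      unfolding \<pi>_def stat_dist_def using theI'[OF uniq_stat] by blast
    have pos: "\<pi> i \<ge> 0" for i using st unfolding is_stationary_def by auto
    have s1: "(\<Sum>i\<in>UNIV. \<pi> i) = 1" using st unfolding is_stationary_def by auto
    have inv: "(\<Sum>i\<in>UNIV. \<pi> i * Pmat p d' i j) = \<pi> j" for j
      using st unfolding is_stationary_def by auto
    have pw: "f_ms p r \<beta> d' i + (\<Sum>j\<in>UNIV. Pmat p d' i j * g j) \<le> g i + J_ms p r \<beta> d" for i
    proof -
      have "f_ms p r \<beta> d' i + (\<Sum>j\<in>UNIV. Pmat p d' i j * g j) = Qval p r \<beta> (J_mu p r d) g i (d' i)"
        unfolding f_ms_def Qval_def Pmat_def using Jmu_const[of d' d] by simp
      also have "\<dots> \<le> g i + J_ms p r \<beta> d" using Qle[of i "d' i"] Qd[of i] by simp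
      finally show ?thesis .
    qed
    have "(\<Sum>i\<in>UNIV. \<pi> i * (f_ms p r \<beta> d' i + (\<Sum>j\<in>UNIV. Pmat p d' i j * g j)))
        \<le> (\<Sum>i\<in>UNIV. \<pi> i * (g i + J_ms p r \<beta> d))"
      by (rule sum_mono) (simp add: mult_left_mono pos pw)
    moreover have "(\<Sum>i\<in>UNIV. \<pi> i * (f_ms p r \<beta> d' i + (\<Sum>j\<in>UNIV. Pmat p d' i j * g j)))
        = J_ms p r \<beta> d' + (\<Sum>j\<in>UNIV. \<pi> j * g j)"
    proof -
      have "(\<Sum>i\<in>UNIV. \<pi> i * (\<Sum>j\<in>UNIV. Pmat p d' i j * g j))
          = (\<Sum>j\<in>UNIV. (\<Sum>i\<in>UNIV. \<pi> i * Pmat p d' i j) * g j)"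
      proof -
        have "(\<Sum>i\<in>UNIV. \<pi> i * (\<Sum>j\<in>UNIV. Pmat p d' i j * g j))
            = (\<Sum>i\<in>UNIV. \<Sum>j\<in>UNIV. \<pi> i * Pmat p d' i j * g j)"
          by (simp add: sum_distrib_left mult.assoc)
        also have "\<dots> = (\<Sum>j\<in>UNIV. \<Sum>i\<in>UNIV. \<pi> i * Pmat p d' i j * g j)"
          by (rule sum.swap)
        also have "\<dots> = (\<Sum>j\<in>UNIV. (\<Sum>i\<in>UNIV. \<pi> i * Pmat p d' i j) * g j)"
          by (simp add: sum_distrib_right)
        finally show ?thesis .
      qed
      also have "\<dots> = (\<Sum>j\<in>UNIV. \<pi> j * g j)" using inv by simp
      finally show ?thesis unfolding J_ms_def \<pi>_def[symmetric]
        by (simp add: distrib_left sum.distrib)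
    qed
    moreover have "(\<Sum>i\<in>UNIV. \<pi> i * (g i + J_ms p r \<beta> d)) = (\<Sum>j\<in>UNIV. \<pi> j * g j) + J_ms p r \<beta> d"
      by (simp add: distrib_left sum.distrib sum_distrib_right[symmetric] s1)
    ultimately show ?thesis by linarith
  qed
  show ?thesis unfolding d_def[symmetric]
    by (rule Max_eqI[symmetric]) (auto simp: bound)
qed

end
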